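(* Let $(\mathfrak{A},\mathfrak{A}_0)$ be a CQ*-algebra as described in the context, and let $\omega$ be a $\|\cdot\|$-continuous positive linear functional on $\mathfrak{A}_0$ with GNS construction $(\pi_\omega,\lambda_\omega,\mathcal{H}_\omega)$. Then there exist a map $\pi_{\overline{\omega}}$ and a linear map $\lambda_{\overline{\omega}}$ such that: (1) $\pi_{\overline{\omega}}$ is a $*$-representation of the quasi *-algebra $(\mathfrak{A},\mathfrak{A}_0)$ into $\mathcal{L}^\dagger(\lambda_\omega(\mathfrak{A}_0), v(\lambda_\omega(\mathfrak{A}_0)))$ (in the Hilbert space $\mathcal{H}_{\overline{\omega}}:=\mathcal{H}_\omega$, with domain $\mathcal{D}(\pi_{\overline{\omega}})=\lambda_\omega(\mathfrak{A}_0)$), which extends $\pi_\omega$; (2) $\lambda_{\overline{\omega}}$ is a linear map from $\mathfrak{A}$ into $v(\lambda_\omega(\mathfrak{A}_0))$ which extends $\lambda_\omega$ and satisfies $\lambda_{\overline{\omega}}(XB)=\pi_{\overline{\omega}}(X)\lambda_\omega(B)$ for all $X\in\mathfrak{A}$ and $B\in\mathfrak{A}_0$.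
   Context: Let $\mathfrak{A}_0$ be a unital C*-algebra with C*-norm $\|\cdot\|_0$ and unit $I$, and let $\|\cdot\|$ be another norm on $\mathfrak{A}_0$ such that $\|A\|\le\|A\|_0$, $\|AB\|\le\|A\|\,\|B\|_0$ and $\|A^*\|=\|A\|$ for all $A,B\in\mathfrak{A}_0$. Let $\mathfrak{A}$ be the completion of $(\mathfrak{A}_0,\|\cdot\|)$, with extended norm still denoted $\|\cdot\|$. For $X\in\mathfrak{A}$, $A\in\mathfrak{A}_0$ and any sequence $A_n\in\mathfrak{A}_0$ with $\|A_n-X\|\to0$, define $XA:=\lim A_nA$, $AX:=\lim AA_n$, $X^*:=\lim A_n^*$ (limits in $\|\cdot\|$); these are well defined and make $(\mathfrak{A},\mathfrak{A}_0)$ a quasi *-algebra (i.e. $\mathfrak{A}$ is an $\mathfrak{A}_0$-bimodule with involution extending that of $\mathfrak{A}_0$, $(XA)^*=A^*X^*$, and $(AX)B=A(XB)$ etc.), called a CQ*-algebra. A linear functional $\omega$ on $\mathfrak{A}_0$ is a $\|\cdot\|$-continuous positive linear functional if $\omega(A^*A)\ge0$ for all $A$ and there is $\gamma>0$ with $|\omega(A)|\le\gamma\|A\|$ for all $A\in\mathfrak{A}_0$. $(\pi_\omega,\lambda_\omega,\mathcal{H}_\omega)$ denotes the usual GNS construction of $\omega$ on the C*-algebra $\mathfrak{A}_0$: $\lambda_\omega:\mathfrak{A}_0\to\mathcal{H}_\omega$ is linear with dense range, $(\lambda_\omega(A)|\lambda_\omega(B))=\omega(B^*A)$, and $\pi_\omega(A)\lambda_\omega(B)=\lambda_\omega(AB)$.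 Unbounded vectors: for a subspace $\mathcal{D}$ of a Hilbert space $\mathcal{H}$, $v(\mathcal{D})$ is the vector space of all conjugate-linear functionals on $\mathcal{D}$ (value of $v$ at $\xi$ written $\langle v,\xi\rangle$); each $\xi\in\mathcal{H}$ is identified with $\eta\mapsto(\xi|\eta)$. $\mathcal{L}^\dagger(\mathcal{D})$ is the *-algebra of linear operators $A$ on $\mathcal{D}$ having an adjoint $A^\dagger$ that maps $\mathcal{D}$ into $\mathcal{D}$. $\mathcal{L}^\dagger(\mathcal{D},v(\mathcal{D}))$ is the set of linear maps $\mathcal{D}\to v(\mathcal{D})$; it is a quasi *-algebra over $\mathcal{L}^\dagger(\mathcal{D})$ with $\langle AX\xi,\eta\rangle=\langle X\xi,A^\dagger\eta\rangle$, $\langle XA\xi,\eta\rangle=\langle X(A\xi),\eta\rangle$, $\langle X^\dagger\xi,\eta\rangle=\overline{\langle X\eta,\xi\rangle}$. A $*$-representation of a quasi *-algebra $(\mathscr{A},\mathscr{A}_0)$ into $\mathcal{L}^\dagger(\mathcal{D},v(\mathcal{D}))$ is a linear map $\pi$ with $\pi(ax)=\pi(a)\pi(x)$, $\pi(xa)=\pi(x)\pi(a)$, $\pi(x^* )=\pi(x)^\dagger$ for all $x\in\mathscr{A}$, $a\in\mathscr{A}_0$ (with $\pi(\mathscr{A}_0)\subset\mathcal{L}^\dagger(\mathcal{D})$). *)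

theory Defs
  imports "HOL-Analysis.Analysis"
begin

text \<open>HOL has no class of complex vector spaces, so complex scalar multiplication
  is an explicit parameter sc compatible with the real scaling of the type.
  The type's own norm is the C*-norm.\<close>

definition complex_scaling :: "(complex \<Rightarrow> 'v::real_vector \<Rightarrow> 'v) \<Rightarrow> bool" where
  "complex_scaling sc \<longleftrightarrow>
     (\<forall>c x y. sc c (x + y) = sc c x + sc c y) \<and>
     (\<forall>c d x. sc (c + d) x = sc c x + sc d x) \<and>
     (\<forall>c d x. sc (c * d) x = sc c (sc d x)) \<and>
     (\<forall>r x. sc (complex_of_real r) x = r *\<^sub>R x)"

definition cstar_algebra ::
  "(complex \<Rightarrow> 'a::{real_normed_algebra_1,banach} \<Rightarrow> 'a) \<Rightarrow> ('a \<Rightarrow> 'a) \<Rightarrow> bool" where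
  "cstar_algebra sc st \<longleftrightarrow>
     complex_scaling sc \<and>
     (\<forall>c a b. sc c (a * b) = sc c a * b \<and> sc c (a * b) = a * sc c b) \<and>
     (\<forall>c a. norm (sc c a) = cmod c * norm a) \<and>
     (\<forall>a. st (st a) = a) \<and>
     (\<forall>a b. st (a + b) = st a + st b) \<and>
     (\<forall>c a. st (sc c a) = sc (cnj c) (st a)) \<and>
     (\<forall>a b. st (a * b) = st b * st a) \<and>
     (\<forall>a. norm (st a * a) = (norm a)\<^sup>2)"

definition cq_norm ::
  "(complex \<Rightarrow> 'a::{real_normed_algebra_1,banach} \<Rightarrow> 'a) \<Rightarrow> ('a \<Rightarrow> 'a) \<Rightarrow> ('a \<Rightarrow> real) \<Rightarrow> bool" where
  "cq_norm sc st nrm \<longleftrightarrow>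
     (\<forall>a. nrm a = 0 \<longleftrightarrow> a = 0) \<and>
     (\<forall>a b. nrm (a + b) \<le> nrm a + nrm b) \<and>
     (\<forall>c a. nrm (sc c a) = cmod c * nrm a) \<and>
     (\<forall>a. nrm a \<le> norm a) \<and>
     (\<forall>a b. nrm (a * b) \<le> nrm a * norm b) \<and>
     (\<forall>a. nrm (st a) = nrm a)"

definition is_completion :: "('a::real_vector \<Rightarrow> 'x::banach) \<Rightarrow> ('a \<Rightarrow> real) \<Rightarrow> bool" where
  "is_completion j nrm \<longleftrightarrow>
     (\<forall>a b. j (a + b) = j a + j b) \<and>
     (\<forall>r a. j (r *\<^sub>R a) = r *\<^sub>R j a) \<and>
     (\<forall>a. norm (j a) = nrm a) \<and>
     closure (range j) = UNIV"

definition ext_op :: "('a \<Rightarrow> 'x::topological_space) \<Rightarrow> ('a \<Rightarrow> 'a) \<Rightarrow> 'x \<Rightarrow> 'x" where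
  "ext_op j f X = (THE Y. \<forall>A. (\<lambda>n. j (A n)) \<longlonglongrightarrow> X \<longrightarrow> (\<lambda>n. j (f (A n))) \<longlonglongrightarrow> Y)"

definition cq_rmul :: "('a::times \<Rightarrow> 'x::topological_space) \<Rightarrow> 'x \<Rightarrow> 'a \<Rightarrow> 'x" where
  "cq_rmul j X A = ext_op j (\<lambda>B. B * A) X"

definition cq_lmul :: "('a::times \<Rightarrow> 'x::topological_space) \<Rightarrow> 'a \<Rightarrow> 'x \<Rightarrow> 'x" where
  "cq_lmul j A X = ext_op j (\<lambda>B. A * B) X"

definition cq_star :: "('a \<Rightarrow> 'x::topological_space) \<Rightarrow> ('a \<Rightarrow> 'a) \<Rightarrow> 'x \<Rightarrow> 'x" where
  "cq_star j st X = ext_op j st X"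

definition cq_scale :: "('a \<Rightarrow> 'x::topological_space) \<Rightarrow> (complex \<Rightarrow> 'a \<Rightarrow> 'a) \<Rightarrow> complex \<Rightarrow> 'x \<Rightarrow> 'x" where
  "cq_scale j sc c X = ext_op j (sc c) X"

definition cont_pos_functional ::
  "(complex \<Rightarrow> 'a::{real_normed_algebra_1,banach} \<Rightarrow> 'a) \<Rightarrow> ('a \<Rightarrow> 'a) \<Rightarrow> ('a \<Rightarrow> real)
    \<Rightarrow> ('a \<Rightarrow> complex) \<Rightarrow> bool" where
  "cont_pos_functional sc st nrm \<omega> \<longleftrightarrow>
     (\<forall>a b. \<omega> (a + b) = \<omega> a + \<omega> b) \<and>
     (\<forall>c a. \<omega> (sc c a) = c * \<omega> a) \<and>
     (\<forall>a. Im (\<omega> (st a * a)) = 0 \<and> Re (\<omega> (st a * a)) \<ge> 0) \<and>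
     (\<exists>\<gamma>>0. \<forall>a. cmod (\<omega> a) \<le> \<gamma> * nrm a)"

definition complex_hilbert ::
  "(complex \<Rightarrow> 'h::{real_normed_vector,banach} \<Rightarrow> 'h) \<Rightarrow> ('h \<Rightarrow> 'h \<Rightarrow> complex) \<Rightarrow> bool" where
  "complex_hilbert shc ip \<longleftrightarrow>
     complex_scaling shc \<and>
     (\<forall>x y z. ip (x + y) z = ip x z + ip y z) \<and>
     (\<forall>c x y. ip (shc c x) y = c * ip x y) \<and>
     (\<forall>x y. ip y x = cnj (ip x y)) \<and>
     (\<forall>x. ip x x = complex_of_real ((norm x)\<^sup>2))"

text \<open>GNS construction of \<omega>: (piw, \<lambda>\<omega>, H\<omega>).\<close>

definition gns ::
  "(complex \<Rightarrow> 'a::{real_normed_algebra_1,banach} \<Rightarrow> 'a) \<Rightarrow> ('a \<Rightarrow> 'a) \<Rightarrow> ('a \<Rightarrow> complex)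
   \<Rightarrow> (complex \<Rightarrow> 'h::{real_normed_vector,banach} \<Rightarrow> 'h) \<Rightarrow> ('h \<Rightarrow> 'h \<Rightarrow> complex)
   \<Rightarrow> ('a \<Rightarrow> 'h) \<Rightarrow> ('a \<Rightarrow> 'h \<Rightarrow> 'h) \<Rightarrow> bool" where
  "gns sc st \<omega> shc ip lam piw \<longleftrightarrow>
     complex_hilbert shc ip \<and>
     (\<forall>a b. lam (a + b) = lam a + lam b) \<and>
     (\<forall>c a. lam (sc c a) = shc c (lam a)) \<and>
     closure (range lam) = UNIV \<and>
     (\<forall>a b. ip (lam a) (lam b) = \<omega> (st b * a)) \<and>
     (\<forall>a. bounded_linear (piw a) \<and> (\<forall>c x. piw a (shc c x) = shc c (piw a x))) \<and>
     (\<forall>a b. piw a (lam b) = lam (a * b))"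

text \<open>Elements of v(D) are represented by functions 'h \<Rightarrow> complex, of which only the
  values on D matter; elements of L\<dagger>(D,v(D)) by X :: 'h \<Rightarrow> 'h \<Rightarrow> complex with
  X \<xi> \<eta> = \<langle>X\<xi>, \<eta>\<rangle>.\<close>

definition conj_lin_on :: "(complex \<Rightarrow> 'h::real_vector \<Rightarrow> 'h) \<Rightarrow> 'h set \<Rightarrow> ('h \<Rightarrow> complex) \<Rightarrow> bool" where
  "conj_lin_on shc D f \<longleftrightarrow>
     (\<forall>x\<in>D. \<forall>y\<in>D. f (x + y) = f x + f y) \<and> (\<forall>c. \<forall>x\<in>D. f (shc c x) = cnj c * f x)"

definition lin_op_on :: "(complex \<Rightarrow> 'h::real_vector \<Rightarrow> 'h) \<Rightarrow> 'h set \<Rightarrow> ('h \<Rightarrow> 'h) \<Rightarrow> bool" where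
  "lin_op_on shc D T \<longleftrightarrow>
     (\<forall>x\<in>D. \<forall>y\<in>D. T (x + y) = T x + T y) \<and> (\<forall>c. \<forall>x\<in>D. T (shc c x) = shc c (T x))"

definition is_adj_on :: "('h \<Rightarrow> 'h \<Rightarrow> complex) \<Rightarrow> 'h set \<Rightarrow> ('h \<Rightarrow> 'h) \<Rightarrow> ('h \<Rightarrow> 'h) \<Rightarrow> bool" where
  "is_adj_on ip D T S \<longleftrightarrow> S ` D \<subseteq> D \<and> (\<forall>\<xi>\<in>D. \<forall>\<eta>\<in>D. ip (T \<xi>) \<eta> = ip \<xi> (S \<eta>))"

definition Ldag :: "(complex \<Rightarrow> 'h::real_vector \<Rightarrow> 'h) \<Rightarrow> ('h \<Rightarrow> 'h \<Rightarrow> complex) \<Rightarrow> 'h set \<Rightarrow> ('h \<Rightarrow> 'h) \<Rightarrow> bool" where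
  "Ldag shc ip D T \<longleftrightarrow> T ` D \<subseteq> D \<and> lin_op_on shc D T \<and> (\<exists>S. is_adj_on ip D T S)"

definition dag_op :: "('h \<Rightarrow> 'h \<Rightarrow> complex) \<Rightarrow> 'h set \<Rightarrow> ('h \<Rightarrow> 'h) \<Rightarrow> ('h \<Rightarrow> 'h)" where
  "dag_op ip D T = (SOME S. is_adj_on ip D T S)"

definition LDv :: "(complex \<Rightarrow> 'h::real_vector \<Rightarrow> 'h) \<Rightarrow> 'h set \<Rightarrow> ('h \<Rightarrow> 'h \<Rightarrow> complex) \<Rightarrow> bool" where
  "LDv shc D X \<longleftrightarrow>
     (\<forall>\<xi>\<in>D. conj_lin_on shc D (X \<xi>)) \<and>
     (\<forall>\<xi>\<in>D. \<forall>\<xi>'\<in>D. \<forall>\<eta>\<in>D. X (\<xi> + \<xi>') \<eta> = X \<xi> \<eta> + X \<xi>' \<eta>) \<and>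
     (\<forall>c. \<forall>\<xi>\<in>D. \<forall>\<eta>\<in>D. X (shc c \<xi>) \<eta> = c * X \<xi> \<eta>)"

definition LDv_lmul :: "('h \<Rightarrow> 'h \<Rightarrow> complex) \<Rightarrow> 'h set \<Rightarrow> ('h \<Rightarrow> 'h) \<Rightarrow> ('h \<Rightarrow> 'h \<Rightarrow> complex) \<Rightarrow> 'h \<Rightarrow> 'h \<Rightarrow> complex" where
  "LDv_lmul ip D T X = (\<lambda>\<xi> \<eta>. X \<xi> (dag_op ip D T \<eta>))"

definition LDv_rmul :: "('h \<Rightarrow> 'h \<Rightarrow> complex) \<Rightarrow> ('h \<Rightarrow> 'h) \<Rightarrow> 'h \<Rightarrow> 'h \<Rightarrow> complex" where
  "LDv_rmul X T = (\<lambda>\<xi> \<eta>. X (T \<xi>) \<eta>)"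

definition LDv_dag :: "('h \<Rightarrow> 'h \<Rightarrow> complex) \<Rightarrow> 'h \<Rightarrow> 'h \<Rightarrow> complex" where
  "LDv_dag X = (\<lambda>\<xi> \<eta>. cnj (X \<eta> \<xi>))"

definition op_to_LDv :: "('h \<Rightarrow> 'h \<Rightarrow> complex) \<Rightarrow> ('h \<Rightarrow> 'h) \<Rightarrow> 'h \<Rightarrow> 'h \<Rightarrow> complex" where
  "op_to_LDv ip T = (\<lambda>\<xi> \<eta>. ip (T \<xi>) \<eta>)"

definition eq_on_D :: "'h set \<Rightarrow> ('h \<Rightarrow> 'h \<Rightarrow> complex) \<Rightarrow> ('h \<Rightarrow> 'h \<Rightarrow> complex) \<Rightarrow> bool" where
  "eq_on_D D X Y \<longleftrightarrow> (\<forall>\<xi>\<in>D. \<forall>\<eta>\<in>D. X \<xi> \<eta> = Y \<xi> \<eta>)"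

definition cq_star_rep ::
  "(complex \<Rightarrow> 'a::{real_normed_algebra_1,banach} \<Rightarrow> 'a) \<Rightarrow> ('a \<Rightarrow> 'a) \<Rightarrow> ('a \<Rightarrow> 'x::banach)
   \<Rightarrow> (complex \<Rightarrow> 'h::{real_normed_vector,banach} \<Rightarrow> 'h) \<Rightarrow> ('h \<Rightarrow> 'h \<Rightarrow> complex) \<Rightarrow> 'h set
   \<Rightarrow> ('a \<Rightarrow> 'h \<Rightarrow> 'h) \<Rightarrow> ('x \<Rightarrow> 'h \<Rightarrow> 'h \<Rightarrow> complex) \<Rightarrow> bool" where
  "cq_star_rep sc st j shc ip D pi0 P \<longleftrightarrow>
     (\<forall>X. LDv shc D (P X)) \<and>
     (\<forall>X Y. eq_on_D D (P (X + Y)) (\<lambda>\<xi> \<eta>. P X \<xi> \<eta> + P Y \<xi> \<eta>)) \<and>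
     (\<forall>c X. eq_on_D D (P (cq_scale j sc c X)) (\<lambda>\<xi> \<eta>. c * P X \<xi> \<eta>)) \<and>
     (\<forall>a. Ldag shc ip D (pi0 a) \<and> eq_on_D D (P (j a)) (op_to_LDv ip (pi0 a))) \<and>
     (\<forall>a X. eq_on_D D (P (cq_lmul j a X)) (LDv_lmul ip D (pi0 a) (P X))) \<and>
     (\<forall>a X. eq_on_D D (P (cq_rmul j X a)) (LDv_rmul (P X) (pi0 a))) \<and>
     (\<forall>X. eq_on_D D (P (cq_star j st X)) (LDv_dag (P X)))"

end

theory Submission imports Defs begin
definition ext_fun :: "('a \<Rightarrow> 'x::topological_space) \<Rightarrow> ('a \<Rightarrow> 'b::topological_space) \<Rightarrow> 'x \<Rightarrow> 'b" where
  "ext_fun j g X = (THE y. \<forall>A. (\<lambda>n. j (A n)) \<longlonglongrightarrow> X \<longrightarrow> (\<lambda>n. g (A n)) \<longlonglongrightarrow> y)"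

lemma ext_op_eq: "ext_op j f X = ext_fun j (\<lambda>a. j (f a)) X"
  by (simp add: ext_op_def ext_fun_def)

lemma dense_seq:
  fixes j :: "'a \<Rightarrow> 'x::first_countable_topology"
  assumes "closure (range j) = UNIV"
  obtains A where "(\<lambda>n. j (A n)) \<longlonglongrightarrow> X"
proof -
  have "X \<in> closure (range j)" unfolding assms by (rule UNIV_I)
  then have "\<exists>x. (\<forall>n. x n \<in> range j) \<and> x \<longlonglongrightarrow> X" by (simp only: closure_sequential[of X "range j"])
  then obtain x where x1: "\<forall>n. x n \<in> range j" and x2: "x \<longlonglongrightarrow> X" by blast
  have "\<forall>n. \<exists>a. x n = j a" using x1 by blast
  from choice[OF this] obtain A where A: "\<forall>n. x n = j (A n)" by blast
  have xeq: "x = (\<lambda>n. j (A n))" using A by (simp add: fun_eq_iff)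
  from x2 have "(\<lambda>n. j (A n)) \<longlonglongrightarrow> X" unfolding xeq .
  then show ?thesis by (rule that)
qed

lemma ext_fun_char:
  fixes j :: "'a \<Rightarrow> 'x::real_normed_vector" and g :: "'a \<Rightarrow> 'b::banach"
  assumes dense: "closure (range j) = UNIV"
    and lip: "\<And>A B. norm (g A - g B) \<le> K * norm (j A - j B)"
    and jA: "(\<lambda>n. j (A n)) \<longlonglongrightarrow> X"
  shows "(\<lambda>n. g (A n)) \<longlonglongrightarrow> ext_fun j g X"
proof -
  have lip': "norm (g A - g B) \<le> \<bar>K\<bar> * norm (j A - j B)" for A B
  proof -
    have "K * norm (j A - j B) \<le> \<bar>K\<bar> * norm (j A - j B)" by (rule mult_right_mono) simp_all
    with lip[of A B] show ?thesis by (rule order_trans)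
  qed
  have trans: "(\<lambda>n. g (B n)) \<longlonglongrightarrow> y"
    if gA: "(\<lambda>n. g (A n)) \<longlonglongrightarrow> y" and jA': "(\<lambda>n. j (A n)) \<longlonglongrightarrow> X" and jB: "(\<lambda>n. j (B n)) \<longlonglongrightarrow> X" for A B y
  proof -
    have "(\<lambda>n. j (B n) - j (A n)) \<longlonglongrightarrow> X - X" using jB jA' by (rule tendsto_diff)
    then have "(\<lambda>n. j (B n) - j (A n)) \<longlonglongrightarrow> 0" by simp
    then have "(\<lambda>n. norm (j (B n) - j (A n))) \<longlonglongrightarrow> 0" by (rule tendsto_norm_zero)
    then have z: "(\<lambda>n. \<bar>K\<bar> * norm (j (B n) - j (A n))) \<longlonglongrightarrow> 0" by (rule tendsto_mult_right_zero)
    have ev: "\<forall>\<^sub>F n in sequentially. norm (g (B n) - g (A n)) \<le> \<bar>K\<bar> * norm (j (B n) - j (A n))"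
      by (intro always_eventually allI lip')
    have "(\<lambda>n. g (B n) - g (A n)) \<longlonglongrightarrow> 0" by (rule Lim_null_comparison[OF ev z])
    then show ?thesis by (rule Lim_transform[OF gA])
  qed
  obtain A0 where A0: "(\<lambda>n. j (A0 n)) \<longlonglongrightarrow> X" using dense_seq[OF dense] by blast
  have C: "Cauchy (\<lambda>n. j (A0 n))" using A0 by (rule LIMSEQ_imp_Cauchy)
  have "Cauchy (\<lambda>n. g (A0 n))"
  proof (rule CauchyI)
    fix e :: real assume e: "e > 0"
    have e': "e / (\<bar>K\<bar>+1) > 0" using e by simp
    from CauchyD[OF C e'] obtain M where M: "\<forall>m\<ge>M. \<forall>n\<ge>M. norm (j (A0 m) - j (A0 n)) < e / (\<bar>K\<bar>+1)"
      by blast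
    show "\<exists>M. \<forall>m\<ge>M. \<forall>n\<ge>M. norm (g (A0 m) - g (A0 n)) < e"
    proof (intro exI allI impI)
      fix m n assume "m \<ge> M" "n \<ge> M"
      then have d: "norm (j (A0 m) - j (A0 n)) < e / (\<bar>K\<bar>+1)" using M by blast
      have "norm (g (A0 m) - g (A0 n)) \<le> \<bar>K\<bar> * norm (j (A0 m) - j (A0 n))" by (rule lip')
      also have "\<dots> \<le> \<bar>K\<bar> * (e / (\<bar>K\<bar>+1))" using d by (intro mult_left_mono) simp_all
      also have "\<dots> < (\<bar>K\<bar>+1) * (e / (\<bar>K\<bar>+1))" using e' by (intro mult_strict_right_mono) simp_all
      also have "\<dots> = e" by simp
      finally show "norm (g (A0 m) - g (A0 n)) < e" .
    qed
  qed
  then have "convergent (\<lambda>n. g (A0 n))" by (simp add: Cauchy_convergent_iff)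
  then obtain y where y: "(\<lambda>n. g (A0 n)) \<longlonglongrightarrow> y" unfolding convergent_def by blast
  have all: "\<forall>A. (\<lambda>n. j (A n)) \<longlonglongrightarrow> X \<longrightarrow> (\<lambda>n. g (A n)) \<longlonglongrightarrow> y"
  proof (intro allI impI)
    fix A assume "(\<lambda>n. j (A n)) \<longlonglongrightarrow> X"
    then show "(\<lambda>n. g (A n)) \<longlonglongrightarrow> y" by (rule trans[OF y A0])
  qed
  have eq: "ext_fun j g X = y" unfolding ext_fun_def
  proof (rule the_equality)
    show "\<forall>A. (\<lambda>n. j (A n)) \<longlonglongrightarrow> X \<longrightarrow> (\<lambda>n. g (A n)) \<longlonglongrightarrow> y" by (rule all)
    fix y' assume H: "\<forall>A. (\<lambda>n. j (A n)) \<longlonglongrightarrow> X \<longrightarrow> (\<lambda>n. g (A n)) \<longlonglongrightarrow> y'"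
    from H[rule_format, OF A0] have "(\<lambda>n. g (A0 n)) \<longlonglongrightarrow> y'" .
    then show "y' = y" using y by (rule LIMSEQ_unique)
  qed
  show ?thesis unfolding eq using all[rule_format, OF jA] .
qed

theorem proposition3p2:
  fixes sc :: "complex \<Rightarrow> 'a::{real_normed_algebra_1,banach} \<Rightarrow> 'a"
    and st :: "'a \<Rightarrow> 'a"
    and nrm :: "'a \<Rightarrow> real"
    and j :: "'a \<Rightarrow> 'x::banach"
    and \<omega> :: "'a \<Rightarrow> complex"
    and shc :: "complex \<Rightarrow> 'h::{real_normed_vector,banach} \<Rightarrow> 'h"
    and ip :: "'h \<Rightarrow> 'h \<Rightarrow> complex"
    and lam :: "'a \<Rightarrow> 'h"
    and piw :: "'a \<Rightarrow> 'h \<Rightarrow> 'h"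
  assumes "cstar_algebra sc st"
    and "cq_norm sc st nrm"
    and "is_completion j nrm"
    and "cont_pos_functional sc st nrm \<omega>"
    and "gns sc st \<omega> shc ip lam piw"
  shows "\<exists>(P :: 'x \<Rightarrow> 'h \<Rightarrow> 'h \<Rightarrow> complex) (L :: 'x \<Rightarrow> 'h \<Rightarrow> complex).
           cq_star_rep sc st j shc ip (range lam) piw P \<and>
           (\<forall>X. conj_lin_on shc (range lam) (L X)) \<and>
           (\<forall>X Y. \<forall>\<eta>\<in>range lam. L (X + Y) \<eta> = L X \<eta> + L Y \<eta>) \<and>
           (\<forall>c X. \<forall>\<eta>\<in>range lam. L (cq_scale j sc c X) \<eta> = c * L X \<eta>) \<and>
           (\<forall>a. \<forall>\<eta>\<in>range lam. L (j a) \<eta> = ip (lam a) \<eta>) \<and>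
           (\<forall>X B. \<forall>\<eta>\<in>range lam. L (cq_rmul j X B) \<eta> = P X (lam B) \<eta>)"
proof -
  note c1 = assms(1)[unfolded cstar_algebra_def complex_scaling_def]
  have st_st: "\<And>a. st (st a) = a" using c1 by meson
  have st_add: "\<And>a b. st (a + b) = st a + st b" using c1 by meson
  have st_mul: "\<And>a b. st (a * b) = st b * st a" using c1 by meson
  have sc_add: "\<And>c x y. sc c (x + y) = sc c x + sc c y" using c1 by meson
  have sc_mull: "\<And>c a b. sc c (a * b) = sc c a * b" using c1 by meson
  note c2 = assms(2)[unfolded cq_norm_def]
  have nrm_sc: "\<And>c a. nrm (sc c a) = cmod c * nrm a" using c2 by meson
  have nrm_mul: "\<And>a b. nrm (a * b) \<le> nrm a * norm b" using c2 by meson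
  have nrm_st: "\<And>a. nrm (st a) = nrm a" using c2 by meson
  note c3 = assms(3)[unfolded is_completion_def]
  have j_add: "\<And>a b. j (a + b) = j a + j b" using c3 by meson
  have j_norm: "\<And>a. norm (j a) = nrm a" using c3 by meson
  have dense: "closure (range j) = UNIV" using c3 by meson
  have "\<exists>\<gamma>>0. \<forall>a. cmod (\<omega> a) \<le> \<gamma> * nrm a"
    using assms(4) unfolding cont_pos_functional_def by blast
  then obtain \<gamma> where \<gamma>: "\<gamma> > 0" "\<And>a. cmod (\<omega> a) \<le> \<gamma> * nrm a"
    by blast
  note g = assms(5)[unfolded gns_def complex_hilbert_def]
  have ip_add: "\<And>x y z. ip (x + y) z = ip x z + ip y z" using g by meson
  have ip_sc: "\<And>c x y. ip (shc c x) y = c * ip x y" using g by meson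
  have ip_cnj: "\<And>x y. ip y x = cnj (ip x y)" using g by meson
  have lam_add: "\<And>a b. lam (a + b) = lam a + lam b" using g by meson
  have lam_sc: "\<And>c a. lam (sc c a) = shc c (lam a)" using g by meson
  have ip_lam: "\<And>a b. ip (lam a) (lam b) = \<omega> (st b * a)" using g by meson
  have piw_bl: "\<And>a. bounded_linear (piw a)" using g by meson
  have piw_sc: "\<And>a c x. piw a (shc c x) = shc c (piw a x)" using g by meson
  have piw_lam: "\<And>a b. piw a (lam b) = lam (a * b)" using g by meson
  have ip_add2: "ip x (y + z) = ip x y + ip x z" for x y z
  proof -
    have "ip x (y+z) = cnj (ip (y+z) x)" by (rule ip_cnj)
    also have "\<dots> = cnj (ip y x) + cnj (ip z x)" by (simp add: ip_add)
    also have "\<dots> = ip x y + ip x z" by (simp add: ip_cnj[of y x] ip_cnj[of z x])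
    finally show ?thesis .
  qed
  have ip_sc2: "ip x (shc c y) = cnj c * ip x y" for x y c
  proof -
    have "ip x (shc c y) = cnj (ip (shc c y) x)" by (rule ip_cnj)
    also have "\<dots> = cnj c * cnj (ip y x)" by (simp add: ip_sc)
    also have "\<dots> = cnj c * ip x y" by (simp add: ip_cnj[of y x])
    finally show ?thesis .
  qed
  have ip_diff: "ip (x - y) z = ip x z - ip y z" for x y z
    using ip_add[of "x - y" y z] by (simp add: eq_diff_eq)
  have j_diff: "j (a - b) = j a - j b" for a b
    using j_add[of "a - b" b] by (simp add: eq_diff_eq)
  have lam_diff: "lam (a - b) = lam a - lam b" for a b
    using lam_add[of "a - b" b] by (simp add: eq_diff_eq)
  have st_diff: "st (a - b) = st a - st b" for a b
    using st_add[of "a - b" b] by (simp add: eq_diff_eq)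
  have sc_diff: "sc c (a - b) = sc c a - sc c b" for c a b
    using sc_add[of c "a - b" b] by (simp add: eq_diff_eq)
  have piw_add: "piw a (x + y) = piw a x + piw a y" for a x y
    by (rule linear_add[OF bounded_linear.linear[OF piw_bl]])
  define D where "D = range lam"
  have D_add: "x + y \<in> D" if "x \<in> D" "y \<in> D" for x y
    using that unfolding D_def by (auto simp: lam_add[symmetric])
  have D_sc: "shc c x \<in> D" if "x \<in> D" for x c
    using that unfolding D_def by (auto simp: lam_sc[symmetric])
  have D_piw: "piw a x \<in> D" if "x \<in> D" for x a
    using that unfolding D_def by (auto simp: piw_lam)
  have piw_add1: "piw (a + b) x = piw a x + piw b x" if "x \<in> D" for a b x
    using that unfolding D_def by (auto simp: piw_lam lam_add distrib_right)
  have piw_sc1: "piw (sc c a) x = shc c (piw a x)" if "x \<in> D" for a c x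
    using that unfolding D_def by (auto simp: piw_lam lam_sc sc_mull[symmetric])
  have piw_mul: "piw (a * b) x = piw a (piw b x)" if "x \<in> D" for a b x
    using that unfolding D_def by (auto simp: piw_lam mult.assoc)
  have adj: "ip (piw a x) y = ip x (piw (st a) y)" if xyD: "x \<in> D" "y \<in> D" for a x y
  proof -
    obtain b c where bc: "x = lam b" "y = lam c" using xyD unfolding D_def by blast
    show ?thesis by (simp add: bc piw_lam ip_lam st_mul st_st mult.assoc)
  qed
  have adjS: "is_adj_on ip D (piw a) (piw (st a))" for a
    unfolding is_adj_on_def
  proof (intro conjI ballI)
    show "piw (st a) ` D \<subseteq> D" by (rule image_subsetI) (rule D_piw)
  next
    fix x y assume "x \<in> D" "y \<in> D"
    then show "ip (piw a x) y = ip x (piw (st a) y)" by (rule adj)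
  qed
  have opconv: "(\<lambda>n. j (f (A n))) \<longlonglongrightarrow> ext_op j f X"
    if fd: "\<And>A B. f (A - B) = f A - f B" and fK: "\<And>C. nrm (f C) \<le> K * nrm C"
      and A: "(\<lambda>n. j (A n)) \<longlonglongrightarrow> X" for f K A X
    unfolding ext_op_eq
  proof (rule ext_fun_char[OF dense _ A])
    fix A B
    have "norm (j (f A) - j (f B)) = nrm (f (A - B))" by (simp add: fd j_diff[symmetric] j_norm)
    also have "\<dots> \<le> K * nrm (A - B)" by (rule fK)
    also have "\<dots> = K * norm (j A - j B)" by (simp add: j_diff[symmetric] j_norm)
    finally show "norm (j (f A) - j (f B)) \<le> K * norm (j A - j B)" .
  qed
  have rmulconv: "(\<lambda>n. j (A n * a)) \<longlonglongrightarrow> cq_rmul j X a" if "(\<lambda>n. j (A n)) \<longlonglongrightarrow> X" for A X a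
    unfolding cq_rmul_def
  proof (rule opconv[where f="\<lambda>B. B * a" and K="norm a", OF _ _ that])
    fix C show "nrm (C * a) \<le> norm a * nrm C" using nrm_mul[of C a] by (simp add: mult.commute)
  qed (simp add: left_diff_distrib)
  have lmulconv: "(\<lambda>n. j (a * A n)) \<longlonglongrightarrow> cq_lmul j a X" if "(\<lambda>n. j (A n)) \<longlonglongrightarrow> X" for A X a
    unfolding cq_lmul_def
  proof (rule opconv[where f="\<lambda>B. a * B" and K="norm (st a)", OF _ _ that])
    fix C
    have "nrm (a * C) = nrm (st C * st a)" using nrm_st[of "a * C"] by (simp add: st_mul)
    also have "\<dots> \<le> nrm (st C) * norm (st a)" by (rule nrm_mul)
    finally show "nrm (a * C) \<le> norm (st a) * nrm C" by (simp add: nrm_st mult.commute)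
  qed (simp add: right_diff_distrib)
  have starconv: "(\<lambda>n. j (st (A n))) \<longlonglongrightarrow> cq_star j st X" if "(\<lambda>n. j (A n)) \<longlonglongrightarrow> X" for A X
    unfolding cq_star_def
    by (rule opconv[where f="st" and K=1, OF _ _ that]) (auto simp: st_diff nrm_st)
  have scaleconv: "(\<lambda>n. j (sc c (A n))) \<longlonglongrightarrow> cq_scale j sc c X" if "(\<lambda>n. j (A n)) \<longlonglongrightarrow> X" for A X c
    unfolding cq_scale_def
    by (rule opconv[where f="sc c" and K="cmod c", OF _ _ that]) (auto simp: sc_diff nrm_sc)
  define P where "P X \<xi> \<eta> = ext_fun j (\<lambda>A. ip (piw A \<xi>) \<eta>) X" for X \<xi> \<eta>
  have Pconv: "(\<lambda>n. ip (piw (A n) \<xi>) \<eta>) \<longlonglongrightarrow> P X \<xi> \<eta>"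
    if xyD: "\<xi> \<in> D" "\<eta> \<in> D" and A: "(\<lambda>n. j (A n)) \<longlonglongrightarrow> X" for A X \<xi> \<eta>
  proof -
    obtain b c where bc: "\<xi> = lam b" "\<eta> = lam c" using xyD unfolding D_def by blast
    have lip: "norm (ip (piw A \<xi>) \<eta> - ip (piw B \<xi>) \<eta>) \<le> (\<gamma> * (norm c * norm b)) * norm (j A - j B)" for A B
    proof -
      have "ip (piw A \<xi>) \<eta> - ip (piw B \<xi>) \<eta> = ip (lam (A*b) - lam (B*b)) (lam c)"
        by (simp add: bc piw_lam ip_diff)
      also have "\<dots> = ip (lam ((A - B) * b)) (lam c)" by (simp add: lam_diff left_diff_distrib)
      also have "\<dots> = \<omega> (st c * ((A - B) * b))" by (rule ip_lam)
      finally have eq: "ip (piw A \<xi>) \<eta> - ip (piw B \<xi>) \<eta> = \<omega> (st c * ((A - B) * b))" .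
      have n1: "nrm (st c * (A - B)) \<le> nrm (A - B) * norm c"
        using nrm_st[of "st c * (A - B)"] nrm_mul[of "st (A-B)" c] nrm_st[of "A-B"] by (simp add: st_mul st_st)
      have n2: "nrm (st c * (A - B) * b) \<le> nrm (st c * (A-B)) * norm b" by (rule nrm_mul)
      have n3: "nrm (st c * (A-B)) * norm b \<le> nrm (A - B) * norm c * norm b"
        using n1 by (rule mult_right_mono) simp
      have n4: "nrm (st c * ((A - B) * b)) \<le> nrm (A - B) * norm c * norm b"
        using n2 n3 by (metis mult.assoc order_trans)
      have "norm (ip (piw A \<xi>) \<eta> - ip (piw B \<xi>) \<eta>) \<le> \<gamma> * nrm (st c * ((A - B) * b))"
        unfolding eq by (rule \<gamma>(2))
      also have "\<dots> \<le> \<gamma> * (nrm (A - B) * norm c * norm b)"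
        using n4 \<gamma>(1) by (intro mult_left_mono) auto
      also have "\<dots> = (\<gamma> * (norm c * norm b)) * norm (j A - j B)"
        by (simp add: j_diff[symmetric] j_norm mult_ac)
      finally show ?thesis .
    qed
    show ?thesis unfolding P_def by (rule ext_fun_char[OF dense lip A])
  qed
  have seq: "\<exists>A. (\<lambda>n. j (A n)) \<longlonglongrightarrow> X" for X using dense_seq[OF dense] by metis
  have Pa1: "P X \<xi> (\<eta> + \<eta>') = P X \<xi> \<eta> + P X \<xi> \<eta>'" if "\<xi> \<in> D" "\<eta> \<in> D" "\<eta>' \<in> D" for X \<xi> \<eta> \<eta>'
  proof -
    obtain A where A: "(\<lambda>n. j (A n)) \<longlonglongrightarrow> X" using seq by blast
    have "(\<lambda>n. ip (piw (A n) \<xi>) (\<eta> + \<eta>')) \<longlonglongrightarrow> P X \<xi> (\<eta> + \<eta>')" by (rule Pconv[OF that(1) D_add[OF that(2,3)] A])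
    moreover have "(\<lambda>n. ip (piw (A n) \<xi>) (\<eta> + \<eta>')) \<longlonglongrightarrow> P X \<xi> \<eta> + P X \<xi> \<eta>'"
      unfolding ip_add2 by (intro tendsto_add Pconv that A)
    ultimately show ?thesis by (rule LIMSEQ_unique)
  qed
  have Pa2: "P X \<xi> (shc c \<eta>) = cnj c * P X \<xi> \<eta>" if "\<xi> \<in> D" "\<eta> \<in> D" for X \<xi> \<eta> c
  proof -
    obtain A where A: "(\<lambda>n. j (A n)) \<longlonglongrightarrow> X" using seq by blast
    have "(\<lambda>n. ip (piw (A n) \<xi>) (shc c \<eta>)) \<longlonglongrightarrow> P X \<xi> (shc c \<eta>)" by (rule Pconv[OF that(1) D_sc[OF that(2)] A])
    moreover have "(\<lambda>n. ip (piw (A n) \<xi>) (shc c \<eta>)) \<longlonglongrightarrow> cnj c * P X \<xi> \<eta>"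
      unfolding ip_sc2 by (intro tendsto_mult_left Pconv that A)
    ultimately show ?thesis by (rule LIMSEQ_unique)
  qed
  have Pb1: "P X (\<xi> + \<xi>') \<eta> = P X \<xi> \<eta> + P X \<xi>' \<eta>" if "\<xi> \<in> D" "\<xi>' \<in> D" "\<eta> \<in> D" for X \<xi> \<xi>' \<eta>
  proof -
    obtain A where A: "(\<lambda>n. j (A n)) \<longlonglongrightarrow> X" using seq by blast
    have "(\<lambda>n. ip (piw (A n) (\<xi> + \<xi>')) \<eta>) \<longlonglongrightarrow> P X (\<xi> + \<xi>') \<eta>" by (rule Pconv[OF D_add[OF that(1,2)] that(3) A])
    moreover have "(\<lambda>n. ip (piw (A n) (\<xi> + \<xi>')) \<eta>) \<longlonglongrightarrow> P X \<xi> \<eta> + P X \<xi>' \<eta>"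
      unfolding piw_add ip_add by (intro tendsto_add Pconv that A)
    ultimately show ?thesis by (rule LIMSEQ_unique)
  qed
  have Pb2: "P X (shc c \<xi>) \<eta> = c * P X \<xi> \<eta>" if "\<xi> \<in> D" "\<eta> \<in> D" for X \<xi> \<eta> c
  proof -
    obtain A where A: "(\<lambda>n. j (A n)) \<longlonglongrightarrow> X" using seq by blast
    have "(\<lambda>n. ip (piw (A n) (shc c \<xi>)) \<eta>) \<longlonglongrightarrow> P X (shc c \<xi>) \<eta>" by (rule Pconv[OF D_sc[OF that(1)] that(2) A])
    moreover have "(\<lambda>n. ip (piw (A n) (shc c \<xi>)) \<eta>) \<longlonglongrightarrow> c * P X \<xi> \<eta>"
      unfolding piw_sc ip_sc by (intro tendsto_mult_left Pconv that A)
    ultimately show ?thesis by (rule LIMSEQ_unique)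
  qed
  have Padd: "P (X + Y) \<xi> \<eta> = P X \<xi> \<eta> + P Y \<xi> \<eta>" if "\<xi> \<in> D" "\<eta> \<in> D" for X Y \<xi> \<eta>
  proof -
    obtain A where A: "(\<lambda>n. j (A n)) \<longlonglongrightarrow> X" using seq by blast
    obtain B where B: "(\<lambda>n. j (B n)) \<longlonglongrightarrow> Y" using seq by blast
    have AB: "(\<lambda>n. j (A n + B n)) \<longlonglongrightarrow> X + Y" unfolding j_add by (intro tendsto_add A B)
    have "(\<lambda>n. ip (piw (A n + B n) \<xi>) \<eta>) \<longlonglongrightarrow> P (X + Y) \<xi> \<eta>" using Pconv[OF that AB] .
    moreover have "(\<lambda>n. ip (piw (A n + B n) \<xi>) \<eta>) \<longlonglongrightarrow> P X \<xi> \<eta> + P Y \<xi> \<eta>"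
      unfolding piw_add1[OF that(1)] ip_add by (intro tendsto_add Pconv that A B)
    ultimately show ?thesis by (rule LIMSEQ_unique)
  qed
  have Pscale: "P (cq_scale j sc c X) \<xi> \<eta> = c * P X \<xi> \<eta>" if "\<xi> \<in> D" "\<eta> \<in> D" for X c \<xi> \<eta>
  proof -
    obtain A where A: "(\<lambda>n. j (A n)) \<longlonglongrightarrow> X" using seq by blast
    have "(\<lambda>n. ip (piw (sc c (A n)) \<xi>) \<eta>) \<longlonglongrightarrow> P (cq_scale j sc c X) \<xi> \<eta>"
      using Pconv[OF that scaleconv[OF A]] .
    moreover have "(\<lambda>n. ip (piw (sc c (A n)) \<xi>) \<eta>) \<longlonglongrightarrow> c * P X \<xi> \<eta>"
      unfolding piw_sc1[OF that(1)] ip_sc by (intro tendsto_mult_left Pconv that A)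
    ultimately show ?thesis by (rule LIMSEQ_unique)
  qed
  have Pj: "P (j a) \<xi> \<eta> = ip (piw a \<xi>) \<eta>" if "\<xi> \<in> D" "\<eta> \<in> D" for a \<xi> \<eta>
  proof -
    have "(\<lambda>n. ip (piw a \<xi>) \<eta>) \<longlonglongrightarrow> P (j a) \<xi> \<eta>"
      using Pconv[OF that, of "\<lambda>n. a" "j a"] by simp
    then show ?thesis by (simp add: LIMSEQ_const_iff)
  qed
  have Plmul: "P (cq_lmul j a X) \<xi> \<eta> = P X \<xi> (dag_op ip D (piw a) \<eta>)" if "\<xi> \<in> D" "\<eta> \<in> D" for a X \<xi> \<eta>
  proof -
    have "is_adj_on ip D (piw a) (piw (st a))" by (rule adjS)
    then have S: "is_adj_on ip D (piw a) (dag_op ip D (piw a))"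
      unfolding dag_op_def by (rule someI[where P="is_adj_on ip D (piw a)"])
    define S where "S = dag_op ip D (piw a)"
    have SD: "S \<eta> \<in> D" and Sadj: "\<And>x. x \<in> D \<Longrightarrow> ip (piw a x) \<eta> = ip x (S \<eta>)"
      using S that unfolding is_adj_on_def S_def by auto
    obtain A where A: "(\<lambda>n. j (A n)) \<longlonglongrightarrow> X" using seq by blast
    have L1: "(\<lambda>n. ip (piw (a * A n) \<xi>) \<eta>) \<longlonglongrightarrow> P (cq_lmul j a X) \<xi> \<eta>"
      using Pconv[OF that lmulconv[OF A]] .
    have eq: "(\<lambda>n. ip (piw (a * A n) \<xi>) \<eta>) = (\<lambda>n. ip (piw (A n) \<xi>) (S \<eta>))"
      using piw_mul[OF that(1)] Sadj D_piw[OF that(1)] by simp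
    have L2: "(\<lambda>n. ip (piw (A n) \<xi>) (S \<eta>)) \<longlonglongrightarrow> P X \<xi> (S \<eta>)"
      using Pconv[OF that(1) SD A] .
    from L1 have "(\<lambda>n. ip (piw (A n) \<xi>) (S \<eta>)) \<longlonglongrightarrow> P (cq_lmul j a X) \<xi> \<eta>" unfolding eq .
    from LIMSEQ_unique[OF this L2] show ?thesis unfolding S_def .
  qed
  have Prmul: "P (cq_rmul j X a) \<xi> \<eta> = P X (piw a \<xi>) \<eta>" if "\<xi> \<in> D" "\<eta> \<in> D" for a X \<xi> \<eta>
  proof -
    obtain A where A: "(\<lambda>n. j (A n)) \<longlonglongrightarrow> X" using seq by blast
    have "(\<lambda>n. ip (piw (A n * a) \<xi>) \<eta>) \<longlonglongrightarrow> P (cq_rmul j X a) \<xi> \<eta>"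
      using Pconv[OF that rmulconv[OF A]] .
    moreover have "(\<lambda>n. ip (piw (A n * a) \<xi>) \<eta>) \<longlonglongrightarrow> P X (piw a \<xi>) \<eta>"
      unfolding piw_mul[OF that(1)] using Pconv[OF D_piw[OF that(1)] that(2) A] .
    ultimately show ?thesis by (rule LIMSEQ_unique)
  qed
  have Pstar: "P (cq_star j st X) \<xi> \<eta> = cnj (P X \<eta> \<xi>)" if "\<xi> \<in> D" "\<eta> \<in> D" for X \<xi> \<eta>
  proof -
    obtain A where A: "(\<lambda>n. j (A n)) \<longlonglongrightarrow> X" using seq by blast
    have L1: "(\<lambda>n. ip (piw (st (A n)) \<xi>) \<eta>) \<longlonglongrightarrow> P (cq_star j st X) \<xi> \<eta>"
      using Pconv[OF that starconv[OF A]] .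
    have eq: "(\<lambda>n. ip (piw (st (A n)) \<xi>) \<eta>) = (\<lambda>n. cnj (ip (piw (A n) \<eta>) \<xi>))"
    proof
      fix n
      have "ip (piw (st (A n)) \<xi>) \<eta> = ip \<xi> (piw (st (st (A n))) \<eta>)" by (rule adj[OF that])
      also have "\<dots> = cnj (ip (piw (A n) \<eta>) \<xi>)" unfolding st_st by (rule ip_cnj)
      finally show "ip (piw (st (A n)) \<xi>) \<eta> = cnj (ip (piw (A n) \<eta>) \<xi>)" .
    qed
    have L2: "(\<lambda>n. cnj (ip (piw (A n) \<eta>) \<xi>)) \<longlonglongrightarrow> cnj (P X \<eta> \<xi>)"
      by (intro tendsto_cnj Pconv that A)
    from L1 have "(\<lambda>n. cnj (ip (piw (A n) \<eta>) \<xi>)) \<longlonglongrightarrow> P (cq_star j st X) \<xi> \<eta>" unfolding eq .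
    from LIMSEQ_unique[OF this L2] show ?thesis .
  qed
  have Ldag: "Ldag shc ip D (piw a)" for a
  proof -
    have "piw a ` D \<subseteq> D" by (rule image_subsetI) (rule D_piw)
    moreover have "lin_op_on shc D (piw a)" unfolding lin_op_on_def using piw_add piw_sc by simp
    moreover have "\<exists>S. is_adj_on ip D (piw a) S" using adjS by blast
    ultimately show ?thesis by (simp add: Ldag_def)
  qed
  have rep: "cq_star_rep sc st j shc ip D piw P"
    unfolding cq_star_rep_def
  proof (intro conjI allI)
    fix X show "LDv shc D (P X)"
      unfolding LDv_def conj_lin_on_def using Pa1 Pa2 Pb1 Pb2 by simp
  next
    fix X Y show "eq_on_D D (P (X + Y)) (\<lambda>\<xi> \<eta>. P X \<xi> \<eta> + P Y \<xi> \<eta>)"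
      unfolding eq_on_D_def using Padd by simp
  next
    fix c X show "eq_on_D D (P (cq_scale j sc c X)) (\<lambda>\<xi> \<eta>. c * P X \<xi> \<eta>)"
      unfolding eq_on_D_def using Pscale by simp
  next
    fix a show "Ldag shc ip D (piw a)" by (rule Ldag)
  next
    fix a show "eq_on_D D (P (j a)) (op_to_LDv ip (piw a))"
      unfolding eq_on_D_def op_to_LDv_def using Pj by simp
  next
    fix a X show "eq_on_D D (P (cq_lmul j a X)) (LDv_lmul ip D (piw a) (P X))"
      unfolding eq_on_D_def LDv_lmul_def using Plmul by simp
  next
    fix a X show "eq_on_D D (P (cq_rmul j X a)) (LDv_rmul (P X) (piw a))"
      unfolding eq_on_D_def LDv_rmul_def using Prmul by simp
  next
    fix X show "eq_on_D D (P (cq_star j st X)) (LDv_dag (P X))"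
      unfolding eq_on_D_def LDv_dag_def using Pstar by simp
  qed
  have l1: "lam 1 \<in> D" unfolding D_def by simp
  show ?thesis unfolding D_def[symmetric]
  proof (intro exI[of _ P] exI[of _ "\<lambda>X \<eta>. P X (lam 1) \<eta>"] conjI rep allI ballI)
    fix X show "conj_lin_on shc D (P X (lam 1))"
      unfolding conj_lin_on_def using Pa1 Pa2 l1 by auto
  next
    fix X Y \<eta> assume "\<eta> \<in> D" then show "P (X + Y) (lam 1) \<eta> = P X (lam 1) \<eta> + P Y (lam 1) \<eta>"
      using Padd l1 by auto
  next
    fix c X \<eta> assume "\<eta> \<in> D" then show "P (cq_scale j sc c X) (lam 1) \<eta> = c * P X (lam 1) \<eta>"
      using Pscale l1 by auto
  next
    fix a \<eta> assume "\<eta> \<in> D" then show "P (j a) (lam 1) \<eta> = ip (lam a) \<eta>"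
      using Pj l1 by (simp add: piw_lam)
  next
    fix X B \<eta> assume "\<eta> \<in> D" then show "P (cq_rmul j X B) (lam 1) \<eta> = P X (lam B) \<eta>"
      using Prmul l1 by (simp add: piw_lam)
  qed
qed

end
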